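(* For every tree metric and every $\alpha>0$, the greedy-routing network creation game with edge price $\alpha$ is weakly acyclic under best responses: from every strategy profile there is a finite sequence of profiles, each obtained from the previous one by a single agent switching to a best response, that ends in a Nash equilibrium.
   Context: A tree metric on a finite set $\mathcal{P}$ is given by a spanning tree $T$ on $\mathcal{P}$ with positive edge weights, $d(x,y)=d_T(x,y)$ being the weight of the unique $x$–$y$ path in $T$. Game: agents are the points of $\mathcal{P}$; agent $u$'s strategy is $S_u\subseteq\mathcal{P}\setminus\{u\}$; a profile $\mathbf{s}$ defines the directed network with arcs $(u,v)$, $v\in S_u$, of length $d(u,v)$. A greedy path from $u$ to $v$ is a directed path $u=x_1,\dots,x_j=v$ of arcs with $d(x_i,v)>d(x_{i+1},v)$ for all $i$. $\mathrm{stretch}(u,v)$ is the minimum length of a greedy path from $u$ to $v$ divided by $d(u,v)$, or a fixed sufficiently large penalty constant $Z$ if none exists. Cost: $c_u(\mathbf{s})=\sum_{v\ne u}\mathrm{stretch}(u,v)+\alpha|S_u|$. A best response of $u$ to $\mathbf{s}$ is a strategy minimizing $c_u(\cdot,\mathbf{s}_{-u})$; a Nash equilibrium is a profile where every agent plays a best response. *)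

theory Defs
  imports Complex_Main
begin

definition edges_on :: "'a set \<Rightarrow> 'a set set \<Rightarrow> bool" where
  "edges_on P E \<longleftrightarrow> (\<forall>e\<in>E. \<exists>x y. x \<in> P \<and> y \<in> P \<and> x \<noteq> y \<and> e = {x, y})"

definition tpath :: "'a set \<Rightarrow> 'a set set \<Rightarrow> 'a \<Rightarrow> 'a \<Rightarrow> 'a list \<Rightarrow> bool" where
  "tpath P E x y xs \<longleftrightarrow> xs \<noteq> [] \<and> hd xs = x \<and> last xs = y \<and> distinct xs \<and> set xs \<subseteq> P \<and>
     (\<forall>i < length xs - 1. {xs ! i, xs ! Suc i} \<in> E)"

definition tcycle :: "'a set \<Rightarrow> 'a set set \<Rightarrow> 'a list \<Rightarrow> bool" where
  "tcycle P E xs \<longleftrightarrow> length xs \<ge> 3 \<and> distinct xs \<and> set xs \<subseteq> P \<and>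
     (\<forall>i < length xs - 1. {xs ! i, xs ! Suc i} \<in> E) \<and> {last xs, hd xs} \<in> E"

definition connected_graph :: "'a set \<Rightarrow> 'a set set \<Rightarrow> bool" where
  "connected_graph P E \<longleftrightarrow> (\<forall>x\<in>P. \<forall>y\<in>P. \<exists>xs. tpath P E x y xs)"

definition spanning_tree :: "'a set \<Rightarrow> 'a set set \<Rightarrow> bool" where
  "spanning_tree P E \<longleftrightarrow> edges_on P E \<and> connected_graph P E \<and> (\<nexists>xs. tcycle P E xs)"

definition path_weight :: "('a set \<Rightarrow> real) \<Rightarrow> 'a list \<Rightarrow> real" where
  "path_weight w xs = (\<Sum>i < length xs - 1. w {xs ! i, xs ! Suc i})"

text \<open>The tree metric: weight of the (unique) x--y path in T.\<close>
definition tree_dist :: "'a set \<Rightarrow> 'a set set \<Rightarrow> ('a set \<Rightarrow> real) \<Rightarrow> 'a \<Rightarrow> 'a \<Rightarrow> real" where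
  "tree_dist P E w x y = (THE r. \<exists>xs. tpath P E x y xs \<and> r = path_weight w xs)"

definition valid_profile :: "'a set \<Rightarrow> ('a \<Rightarrow> 'a set) \<Rightarrow> bool" where
  "valid_profile P s \<longleftrightarrow> (\<forall>u. (u \<in> P \<longrightarrow> s u \<subseteq> P - {u}) \<and> (u \<notin> P \<longrightarrow> s u = {}))"

definition greedy_path :: "('a \<Rightarrow> 'a \<Rightarrow> real) \<Rightarrow> ('a \<Rightarrow> 'a set) \<Rightarrow> 'a \<Rightarrow> 'a \<Rightarrow> 'a list \<Rightarrow> bool" where
  "greedy_path d s u v xs \<longleftrightarrow> xs \<noteq> [] \<and> hd xs = u \<and> last xs = v \<and>
     (\<forall>i < length xs - 1. xs ! Suc i \<in> s (xs ! i) \<and> d (xs ! Suc i) v < d (xs ! i) v)"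

definition greedy_len :: "('a \<Rightarrow> 'a \<Rightarrow> real) \<Rightarrow> 'a list \<Rightarrow> real" where
  "greedy_len d xs = (\<Sum>i < length xs - 1. d (xs ! i) (xs ! Suc i))"

definition stretch :: "('a \<Rightarrow> 'a \<Rightarrow> real) \<Rightarrow> real \<Rightarrow> ('a \<Rightarrow> 'a set) \<Rightarrow> 'a \<Rightarrow> 'a \<Rightarrow> real" where
  "stretch d Z s u v =
     (if \<exists>xs. greedy_path d s u v xs
      then Min {greedy_len d xs | xs. greedy_path d s u v xs} / d u v
      else Z)"

definition cost :: "'a set \<Rightarrow> ('a \<Rightarrow> 'a \<Rightarrow> real) \<Rightarrow> real \<Rightarrow> real \<Rightarrow> ('a \<Rightarrow> 'a set) \<Rightarrow> 'a \<Rightarrow> real" where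
  "cost P d \<alpha> Z s u = (\<Sum>v \<in> P - {u}. stretch d Z s u v) + \<alpha> * real (card (s u))"

definition best_response :: "'a set \<Rightarrow> ('a \<Rightarrow> 'a \<Rightarrow> real) \<Rightarrow> real \<Rightarrow> real \<Rightarrow> ('a \<Rightarrow> 'a set) \<Rightarrow> 'a \<Rightarrow> 'a set \<Rightarrow> bool" where
  "best_response P d \<alpha> Z s u S \<longleftrightarrow> S \<subseteq> P - {u} \<and>
     (\<forall>S'. S' \<subseteq> P - {u} \<longrightarrow> cost P d \<alpha> Z (s(u := S)) u \<le> cost P d \<alpha> Z (s(u := S')) u)"

definition nash_equilibrium :: "'a set \<Rightarrow> ('a \<Rightarrow> 'a \<Rightarrow> real) \<Rightarrow> real \<Rightarrow> real \<Rightarrow> ('a \<Rightarrow> 'a set) \<Rightarrow> bool" where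
  "nash_equilibrium P d \<alpha> Z s \<longleftrightarrow> valid_profile P s \<and> (\<forall>u\<in>P. best_response P d \<alpha> Z s u (s u))"

definition br_step :: "'a set \<Rightarrow> ('a \<Rightarrow> 'a \<Rightarrow> real) \<Rightarrow> real \<Rightarrow> real \<Rightarrow> ('a \<Rightarrow> 'a set) \<Rightarrow> ('a \<Rightarrow> 'a set) \<Rightarrow> bool" where
  "br_step P d \<alpha> Z s s' \<longleftrightarrow> (\<exists>u\<in>P. \<exists>S. best_response P d \<alpha> Z s u S \<and> s' = s(u := S))"

definition weakly_acyclic_br :: "'a set \<Rightarrow> ('a \<Rightarrow> 'a \<Rightarrow> real) \<Rightarrow> real \<Rightarrow> real \<Rightarrow> bool" where
  "weakly_acyclic_br P d \<alpha> Z \<longleftrightarrow>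
     (\<forall>s. valid_profile P s \<longrightarrow>
        (\<exists>ss. ss \<noteq> [] \<and> hd ss = s \<and>
              (\<forall>i < length ss - 1. br_step P d \<alpha> Z (ss ! i) (ss ! Suc i)) \<and>
              nash_equilibrium P d \<alpha> Z (last ss)))"

end

theory Submission
  imports Defs
begin

fun wall :: "('a \<Rightarrow> 'a \<Rightarrow> bool) \<Rightarrow> 'a list \<Rightarrow> bool" where
  "wall R (a # b # xs) = (R a b \<and> wall R (b # xs))"
| "wall R _ = True"

fun wsum :: "('a \<Rightarrow> 'a \<Rightarrow> real) \<Rightarrow> 'a list \<Rightarrow> real" where
  "wsum f (a # b # xs) = f a b + wsum f (b # xs)"
| "wsum f _ = 0"

lemma wall_nth: "(\<forall>i < length xs - 1. R (xs!i) (xs ! Suc i)) \<longleftrightarrow> wall R xs"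
proof (induction R xs rule: wall.induct)
  case (1 R a b xs)
  have "(\<forall>i < length (a#b#xs) - 1. R ((a#b#xs)!i) ((a#b#xs) ! Suc i)) \<longleftrightarrow>
        R a b \<and> (\<forall>i < length (b#xs) - 1. R ((b#xs)!i) ((b#xs) ! Suc i))"
    by (auto simp: less_Suc_eq_0_disj)
  with 1 show ?case by simp
qed auto

lemma wsum_nth: "(\<Sum>i < length xs - 1. f (xs!i) (xs ! Suc i)) = wsum f xs"
proof (induction f xs rule: wsum.induct)
  case (1 f a b xs)
  have "(\<Sum>i < length (a#b#xs) - 1. f ((a#b#xs)!i) ((a#b#xs) ! Suc i)) =
        f a b + (\<Sum>i < length (b#xs) - 1. f ((b#xs)!i) ((b#xs) ! Suc i))"
    by (simp del: sum.lessThan_Suc add: sum.lessThan_Suc_shift)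
  with 1 show ?case by simp
qed auto

lemma wall_append: "wall R (xs @ y # ys) \<longleftrightarrow> wall R (xs @ [y]) \<and> wall R (y # ys)"
proof (induction xs)
  case (Cons a xs) thus ?case by (cases xs) auto
qed simp

lemma wsum_append: "wsum f (xs @ y # ys) = wsum f (xs @ [y]) + wsum f (y # ys)"
proof (induction xs)
  case (Cons a xs) thus ?case by (cases xs) auto
qed simp

lemma wall_rev: "wall R (rev xs) \<longleftrightarrow> wall (\<lambda>a b. R b a) xs"
proof (induction R xs rule: wall.induct)
  case (1 R a b xs)
  have "rev (a#b#xs) = rev xs @ b # [a]" by simp
  hence "wall R (rev (a#b#xs)) = (wall R (rev xs @ [b]) \<and> R b a)"
    using wall_append[of R "rev xs" b "[a]"] by simp
  with 1 show ?case by auto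
qed auto

lemma wsum_rev: "wsum f (rev xs) = wsum (\<lambda>a b. f b a) xs"
proof (induction f xs rule: wsum.induct)
  case (1 f a b xs)
  have "rev (a#b#xs) = rev xs @ b # [a]" by simp
  hence "wsum f (rev (a#b#xs)) = wsum f (rev xs @ [b]) + f b a"
    using wsum_append[of f "rev xs" b "[a]"] by simp
  with 1 show ?case by simp
qed auto

lemma wall_sym_edges: "wall (\<lambda>a b. {b,a} \<in> E) xs = wall (\<lambda>a b. {a,b} \<in> E) xs"
  by (simp add: insert_commute)

lemma tpath_iff: "tpath P E x y xs \<longleftrightarrow> xs \<noteq> [] \<and> hd xs = x \<and> last xs = y \<and> distinct xs \<and> set xs \<subseteq> P
    \<and> wall (\<lambda>a b. {a,b} \<in> E) xs"
  unfolding tpath_def using wall_nth[of xs "\<lambda>a b. {a,b} \<in> E"] by simp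

lemma tcycle_iff: "tcycle P E xs \<longleftrightarrow> length xs \<ge> 3 \<and> distinct xs \<and> set xs \<subseteq> P
    \<and> wall (\<lambda>a b. {a,b} \<in> E) xs \<and> {last xs, hd xs} \<in> E"
  unfolding tcycle_def using wall_nth[of xs "\<lambda>a b. {a,b} \<in> E"] by simp

lemma greedy_path_iff: "greedy_path d s u v xs \<longleftrightarrow> xs \<noteq> [] \<and> hd xs = u \<and> last xs = v
    \<and> wall (\<lambda>a b. b \<in> s a \<and> d b v < d a v) xs"
  unfolding greedy_path_def using wall_nth[of xs "\<lambda>a b. b \<in> s a \<and> d b v < d a v"] by simp

lemma greedy_len_eq: "greedy_len d xs = wsum d xs"
  unfolding greedy_len_def using wsum_nth[of d xs] by simp

lemma path_weight_eq: "path_weight w xs = wsum (\<lambda>a b. w {a,b}) xs"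
  unfolding path_weight_def using wsum_nth[of "\<lambda>a b. w {a,b}" xs] by simp

lemma wall_Cons: "wall R (x # L) \<longleftrightarrow> (L \<noteq> [] \<longrightarrow> R x (hd L)) \<and> wall R L"
  by (cases L) auto

lemma wall_cong: "(\<And>a b. a \<in> set xs \<Longrightarrow> R a b = R' a b) \<Longrightarrow> wall R xs = wall R' xs"
  by (induction R xs rule: wall.induct) auto

lemma gp_Cons: "greedy_path dd s x v (x # y # ys) \<longleftrightarrow> y \<in> s x \<and> dd y v < dd x v \<and> greedy_path dd s y v (y # ys)"
  by (auto simp: greedy_path_iff)

lemma gp_single: "greedy_path dd s x v [x] \<longleftrightarrow> x = v"
  by (auto simp: greedy_path_iff)

lemma gp_hd: "greedy_path dd s x v xs \<Longrightarrow> \<exists>ys. xs = x # ys"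
  by (cases xs) (auto simp: greedy_path_iff)

lemma gl_Cons: "greedy_len dd (x # y # ys) = dd x y + greedy_len dd (y # ys)"
  by (simp add: greedy_len_eq)

lemma gl_single: "greedy_len dd [x] = 0"
  by (simp add: greedy_len_eq)

lemma gp_upd: "u \<notin> set xs \<Longrightarrow> greedy_path dd (s(u:=A)) x v xs \<longleftrightarrow> greedy_path dd s x v xs"
  unfolding greedy_path_iff
  by (subst wall_cong[where R'="\<lambda>a b. b \<in> s a \<and> dd b v < dd a v"]) auto

lemma valid_upd: "valid_profile P s \<Longrightarrow> u \<in> P \<Longrightarrow> A \<subseteq> P - {u} \<Longrightarrow> valid_profile P (s(u:=A))"
  unfolding valid_profile_def by auto

lemma rt_list: "R\<^sup>*\<^sup>* a b \<Longrightarrow> \<exists>ss. ss \<noteq> [] \<and> hd ss = a \<and> last ss = b \<and> (\<forall>i < length ss - 1. R (ss ! i) (ss ! Suc i))"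
proof (induction rule: converse_rtranclp_induct)
  case base
  show ?case by (intro exI[of _ "[b]"]) simp
next
  case (step a a')
  then obtain ss where ss: "ss \<noteq> []" "hd ss = a'" "last ss = b" "wall R ss" using wall_nth by metis
  have "wall R (a # ss)" using ss step(1) by (cases ss) auto
  hence "\<forall>i < length (a#ss) - 1. R ((a#ss) ! i) ((a#ss) ! Suc i)" using wall_nth by metis
  thus ?case using ss by (intro exI[of _ "a # ss"]) simp
qed

lemma sorted_take: assumes "sorted (map f L)" "y \<in> set L" "k < length L" "f y < f (L ! k)"
  shows "y \<in> set (take k L)"
proof -
  obtain j where j: "j < length L" "L ! j = y" using assms(2) by (meson in_set_conv_nth)
  have "j < k"
  proof (rule ccontr)
    assume "\<not> j < k"
    hence "f (L ! k) \<le> f (L ! j)" using sorted_nth_mono[OF assms(1), of k j] j(1) by simp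
    thus False using assms(4) j(2) by simp
  qed
  thus ?thesis using j by (metis in_set_conv_nth length_take min_less_iff_conj nth_take)
qed

locale tree_loc =
  fixes P :: "'a set" and E :: "'a set set" and w :: "'a set \<Rightarrow> real"
  assumes finP: "finite P" and st: "spanning_tree P E" and wpos: "\<forall>e\<in>E. w e > 0"
begin

abbreviation W where "W \<equiv> wall (\<lambda>a b. {a,b} \<in> E)"

lemma edge_in: "{a,b} \<in> E \<Longrightarrow> a \<in> P \<and> b \<in> P \<and> a \<noteq> b"
  using st unfolding spanning_tree_def edges_on_def by (fastforce simp: doubleton_eq_iff)

lemma nocyc: "\<not> tcycle P E c" using st unfolding spanning_tree_def by blast

lemma two_branch: assumes "tpath P E a y xs" "tpath P E b y ys" "a \<noteq> b" "x \<notin> set xs" "x \<notin> set ys"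
  "{x,a} \<in> E" "{x,b} \<in> E" "x \<in> P" shows False
proof -
  have ax: "xs \<noteq> []" "hd xs = a" "last xs = y" "distinct xs" "set xs \<subseteq> P" "W xs"
    using assms(1) by (auto simp: tpath_iff)
  have bx: "ys \<noteq> []" "hd ys = b" "last ys = y" "distinct ys" "set ys \<subseteq> P" "W ys"
    using assms(2) by (auto simp: tpath_iff)
  have "\<exists>z\<in>set ys. z \<in> set xs" using ax bx by (metis last_in_set)
  then obtain p z q where ys: "ys = p @ z # q" and zx: "z \<in> set xs" and pd: "\<forall>t\<in>set p. t \<notin> set xs"
    using split_list_first_prop[of ys "\<lambda>z. z \<in> set xs"] by blast
  from zx obtain p' q' where xs: "xs = p' @ z # q'" by (meson split_list)
  define c where "c = x # p' @ z # rev p"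
  have hda: "hd (p' @ z # rev p) = a" using ax(2) xs by (cases p') auto
  have lastb: "last c = b"
  proof (cases p)
    case Nil then show ?thesis using bx(2) ys c_def by simp
  next
    case (Cons t p2) then show ?thesis using bx(2) ys c_def by simp
  qed
  have w1: "W (p' @ [z])" using ax(6) xs wall_append by metis
  have w2: "W (p @ [z])" using bx(6) ys wall_append by metis
  have "wall (\<lambda>a b. {b,a}\<in>E) (p@[z])" using w2 by (simp add: insert_commute)
  hence "W (rev (p@[z]))" by (simp only: wall_rev)
  hence w3: "W (z # rev p)" by simp
  have "W (p' @ z # rev p)" using w1 w3 wall_append by metis
  hence wc: "W c" unfolding c_def using hda assms(6) by (simp add: wall_Cons)
  have dc: "distinct c" unfolding c_def using ax(4) bx(4) xs ys pd assms(4,5) by auto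
  have sc: "set c \<subseteq> P" unfolding c_def using ax(5) bx(5) xs ys assms(8) by auto
  have lc: "length c \<ge> 3"
  proof (cases p)
    case Nil
    hence "z = b" using ys bx(2) by simp
    hence "p' \<noteq> []" using xs ax(2) assms(3) by auto
    thus ?thesis unfolding c_def using Nil by (cases p') auto
  next
    case (Cons t p2) thus ?thesis unfolding c_def by simp
  qed
  have "{last c, hd c} \<in> E" using lastb assms(7) unfolding c_def by (simp add: insert_commute)
  hence "tcycle P E c" using wc dc sc lc by (simp add: tcycle_iff)
  thus False using nocyc by blast
qed

lemma tp_uniq: "tpath P E x y xs \<Longrightarrow> tpath P E x y ys \<Longrightarrow> xs = ys"
proof (induction xs arbitrary: x ys)
  case Nil then show ?case by (simp add: tpath_iff)
next
  case (Cons x0 xs)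
  have x0: "x0 = x" using Cons.prems by (simp add: tpath_iff)
  have "ys \<noteq> []" "hd ys = x" using Cons.prems by (auto simp: tpath_iff)
  then obtain ys' where ys: "ys = x # ys'" by (cases ys) auto
  show ?case
  proof (cases xs)
    case Nil
    hence "y = x" using Cons.prems x0 by (simp add: tpath_iff)
    have "ys' = []"
    proof (rule ccontr)
      assume "ys' \<noteq> []"
      hence "last ys' = y" "last ys' \<in> set ys'" using Cons.prems(2) ys by (auto simp: tpath_iff)
      thus False using Cons.prems(2) ys \<open>y = x\<close> by (auto simp: tpath_iff)
    qed
    thus ?thesis using Nil x0 ys by simp
  next
    case (Cons a xs2)
    have ys'ne: "ys' \<noteq> []"
    proof
      assume "ys' = []"
      hence "y = x" using Cons.prems(2) ys by (simp add: tpath_iff)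
      moreover have "last xs = y" "x \<notin> set xs" using Cons.prems(1) x0 Cons by (auto simp: tpath_iff)
      moreover have "last xs \<in> set xs" using Cons by simp
      ultimately show False by simp
    qed
    then obtain b ys2 where ys': "ys' = b # ys2" by (cases ys') auto
    have tpa: "tpath P E a y xs" using Cons.prems(1) Cons x0 by (auto simp: tpath_iff)
    have tpb: "tpath P E b y ys'" using Cons.prems(2) ys ys' by (auto simp: tpath_iff)
    show ?thesis
    proof (cases "a = b")
      case True thus ?thesis using Cons.IH[OF tpa] tpb x0 ys by simp
    next
      case False
      have "x \<notin> set xs" "{x,a} \<in> E" "x \<in> P" using Cons.prems(1) Cons x0 by (auto simp: tpath_iff)
      moreover have "x \<notin> set ys'" "{x,b} \<in> E" using Cons.prems(2) ys ys' by (auto simp: tpath_iff)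
      ultimately show ?thesis using two_branch[OF tpa tpb False] by blast
    qed
  qed
qed


definition pth where "pth x y = (THE xs. tpath P E x y xs)"
abbreviation d where "d \<equiv> tree_dist P E w"
abbreviation pw where "pw \<equiv> wsum (\<lambda>a b. w {a,b})"
definition nx where "nx x y = hd (tl (pth x y))"

lemma tp_ex: "x \<in> P \<Longrightarrow> y \<in> P \<Longrightarrow> \<exists>xs. tpath P E x y xs"
  using st unfolding spanning_tree_def connected_graph_def by blast

lemma pth: "x \<in> P \<Longrightarrow> y \<in> P \<Longrightarrow> tpath P E x y (pth x y)"
  unfolding pth_def using tp_ex tp_uniq by (metis theI')

lemma pth_eq: "tpath P E x y xs \<Longrightarrow> pth x y = xs"
proof -
  assume a: "tpath P E x y xs"
  hence "x \<in> P" "y \<in> P" unfolding tpath_iff by (metis hd_in_set subsetD, metis last_in_set subsetD)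
  thus ?thesis using pth tp_uniq a by blast
qed

lemma pthf: assumes "x \<in> P" "y \<in> P"
  shows "pth x y \<noteq> []" "hd (pth x y) = x" "last (pth x y) = y" "distinct (pth x y)"
    "set (pth x y) \<subseteq> P" "W (pth x y)"
  using pth[OF assms] by (auto simp: tpath_iff)

lemma d_eq: assumes "x \<in> P" "y \<in> P" shows "d x y = pw (pth x y)"
  unfolding tree_dist_def
proof (rule the_equality)
  show "\<exists>xs. tpath P E x y xs \<and> pw (pth x y) = path_weight w xs"
    using pth[OF assms] by (auto simp: path_weight_eq)
  show "\<And>r. \<exists>xs. tpath P E x y xs \<and> r = path_weight w xs \<Longrightarrow> r = pw (pth x y)"
    using pth_eq by (auto simp: path_weight_eq)
qed

lemma pth_refl: "x \<in> P \<Longrightarrow> pth x x = [x]"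
  by (rule pth_eq) (simp add: tpath_iff)

lemma d_refl: "x \<in> P \<Longrightarrow> d x x = 0"
  using d_eq pth_refl by simp

lemma pth_step: assumes "x \<in> P" "y \<in> P" "x \<noteq> y"
  shows "pth x y = x # pth (nx x y) y" "{x, nx x y} \<in> E" "nx x y \<in> P"
proof -
  obtain t where t: "pth x y = x # t" using pthf(1,2)[OF assms(1,2)] by (cases "pth x y") auto
  have "t \<noteq> []" using t pthf(3)[OF assms(1,2)] assms(3) by auto
  then obtain a t2 where t2: "t = a # t2" by (cases t) auto
  have "tpath P E a y t" using pth[OF assms(1,2)] t t2 by (auto simp: tpath_iff)
  hence "pth a y = t" by (rule pth_eq)
  moreover have "nx x y = a" unfolding nx_def using t t2 by simp
  ultimately show "pth x y = x # pth (nx x y) y" using t by simp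
  show "{x, nx x y} \<in> E" "nx x y \<in> P" using pth[OF assms(1,2)] t t2 \<open>nx x y = a\<close> by (auto simp: tpath_iff)
qed

lemma pth_edge: "{x,n} \<in> E \<Longrightarrow> pth x n = [x,n]"
  by (rule pth_eq) (use edge_in[of x n] in \<open>auto simp: tpath_iff\<close>)

lemma nx_edge: "{x,n} \<in> E \<Longrightarrow> nx x n = n"
  unfolding nx_def using pth_edge by simp

lemma d_edge: "{x,n} \<in> E \<Longrightarrow> d x n = w {x,n}"
  using pth_edge[of x n] d_eq[of x n] edge_in[of x n] by simp

lemma pw_nonneg: "W xs \<Longrightarrow> pw xs \<ge> 0"
  by (induction "\<lambda>a b. w {a,b}" xs rule: wsum.induct) (use wpos in \<open>auto intro: add_nonneg_nonneg less_imp_le\<close>)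

lemma d_nonneg: "x \<in> P \<Longrightarrow> y \<in> P \<Longrightarrow> d x y \<ge> 0"
  using d_eq pw_nonneg pthf(6) by simp

lemma d_step: assumes "x \<in> P" "y \<in> P" "x \<noteq> y"
  shows "d x y = d x (nx x y) + d (nx x y) y"
proof -
  have "pth (nx x y) y \<noteq> []" "hd (pth (nx x y) y) = nx x y"
    using pthf[OF pth_step(3)[OF assms] assms(2)] by auto
  then obtain t where t: "pth (nx x y) y = nx x y # t" by (cases "pth (nx x y) y") auto
  have "d x y = pw (pth x y)" using d_eq assms by simp
  also have "\<dots> = w {x, nx x y} + pw (pth (nx x y) y)" using pth_step(1)[OF assms] t by simp
  also have "\<dots> = d x (nx x y) + d (nx x y) y"
    using d_edge[OF pth_step(2)[OF assms]] d_eq[OF pth_step(3)[OF assms] assms(2)] by simp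
  finally show ?thesis .
qed

lemma d_pos: assumes "x \<in> P" "y \<in> P" "x \<noteq> y" shows "d x y > 0"
proof -
  have "d x (nx x y) > 0" using d_edge[OF pth_step(2)[OF assms]] wpos pth_step(2)[OF assms] by auto
  moreover have "d (nx x y) y \<ge> 0" using d_nonneg pth_step(3)[OF assms] assms by simp
  ultimately show ?thesis using d_step[OF assms] by simp
qed

lemma pth_rev: assumes "x \<in> P" "y \<in> P" shows "pth y x = rev (pth x y)"
proof (rule pth_eq)
  have "wall (\<lambda>a b. {b,a}\<in>E) (pth x y)" using pthf(6)[OF assms] by (simp add: insert_commute)
  hence "W (rev (pth x y))" by (simp only: wall_rev)
  thus "tpath P E y x (rev (pth x y))" unfolding tpath_iff using pthf[OF assms] by (simp add: hd_rev last_rev)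
qed

lemma d_sym: assumes "x \<in> P" "y \<in> P" shows "d x y = d y x"
proof -
  have "d y x = pw (rev (pth x y))" using d_eq[OF assms(2,1)] pth_rev[OF assms] by simp
  also have "\<dots> = wsum (\<lambda>a b. w {b,a}) (pth x y)" by (simp only: wsum_rev)
  also have "\<dots> = pw (pth x y)"
  proof -
    have e: "(\<lambda>a b. w {b,a}) = (\<lambda>a b. w {a,b})" by (intro ext) (metis insert_commute)
    show ?thesis by (simp only: e)
  qed
  also have "\<dots> = d x y" using d_eq assms by simp
  finally show ?thesis by simp
qed

lemma pth_split: assumes "x \<in> P" "v \<in> P" "y \<in> set (pth x v)"
  shows "\<exists>p q. pth x v = p @ y # q \<and> pth x y = p @ [y] \<and> pth y v = y # q"
proof -
  obtain p q where pq: "pth x v = p @ y # q" using assms(3) by (meson split_list)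
  have f: "pth x v \<noteq> []" "hd (pth x v) = x" "last (pth x v) = v" "distinct (pth x v)"
    "set (pth x v) \<subseteq> P" "W (pth x v)" using pthf[OF assms(1,2)] by auto
  have "W (p @ y # q)" using f(6) pq by simp
  hence "W (p @ [y])" "W (y # q)" using wall_append[of _ p y q] by simp_all
  moreover have "hd (p @ [y]) = x" using f(2) pq by (cases p) auto
  moreover have "last (y # q) = v" using f(3) pq by (cases q) auto
  ultimately have "tpath P E x y (p @ [y])" "tpath P E y v (y # q)"
    using f(4,5) pq by (auto simp: tpath_iff)
  thus ?thesis using pq pth_eq by blast
qed

lemma d_split: assumes "x \<in> P" "v \<in> P" "y \<in> set (pth x v)"
  shows "d x v = d x y + d y v"
proof -
  have yP: "y \<in> P" using pthf(5)[OF assms(1,2)] assms(3) by auto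
  obtain p q where "pth x v = p @ y # q" "pth x y = p @ [y]" "pth y v = y # q"
    using pth_split[OF assms] by blast
  thus ?thesis using d_eq[OF assms(1,2)] d_eq[OF assms(1) yP] d_eq[OF yP assms(2)] wsum_append[of _ p y q] by simp
qed

lemma d_edge_tri: assumes "{x,x'} \<in> E" "z \<in> P" shows "d x z \<le> w {x,x'} + d x' z"
proof -
  have xP: "x \<in> P" "x' \<in> P" "x \<noteq> x'" using edge_in assms(1) by auto
  show ?thesis
  proof (cases "x \<in> set (pth x' z)")
    case True
    hence "d x' z = d x' x + d x z" using d_split xP assms by blast
    moreover have "d x' x \<ge> 0" using d_nonneg xP by simp
    moreover have "w {x,x'} > 0" using wpos assms by auto
    ultimately show ?thesis by simp
  next
    case False
    have "tpath P E x z (x # pth x' z)"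
      using pthf[OF xP(2) assms(2)] False xP assms(1) by (auto simp: tpath_iff wall_Cons)
    hence "pth x z = x # pth x' z" by (rule pth_eq)
    moreover obtain t where "pth x' z = x' # t" using pthf(1,2)[OF xP(2) assms(2)] by (cases "pth x' z") auto
    ultimately show ?thesis using d_eq xP assms(2) by simp
  qed
qed

lemma tri: assumes "x \<in> P" "y \<in> P" "z \<in> P" shows "d x z \<le> d x y + d y z"
  using assms
proof (induction "length (pth x y)" arbitrary: x rule: less_induct)
  case less
  show ?case
  proof (cases "x = y")
    case True thus ?thesis using d_refl less by simp
  next
    case False
    note st = pth_step[OF less.prems(1,2) False]
    have "length (pth (nx x y) y) < length (pth x y)" using st(1) by simp
    hence ih: "d (nx x y) z \<le> d (nx x y) y + d y z" using less st(3) by blast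
    have "d x z \<le> w {x, nx x y} + d (nx x y) z" using d_edge_tri st(2) less by blast
    also have "\<dots> \<le> d x (nx x y) + d (nx x y) y + d y z" using ih d_edge[OF st(2)] by simp
    also have "\<dots> = d x y + d y z" using d_step[OF less.prems(1,2) False] by simp
    finally show ?thesis .
  qed
qed


lemma F1: assumes "u \<in> P" "x \<in> P" "v \<in> P" "x \<noteq> u" "v \<noteq> u" "nx u x \<noteq> nx u v"
  shows "d x v = d x u + d u v"
proof -
  have A: "pth u x = u # pth (nx u x) x" and B: "pth u v = u # pth (nx u v) v"
    using pth_step assms by metis+
  have nxP: "nx u x \<in> P" "nx u v \<in> P" using pth_step assms by metis+
  have disj: "z = u" if z: "z \<in> set (pth u x)" "z \<in> set (pth u v)" for z
  proof (rule ccontr)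
    assume zu: "z \<noteq> u"
    have zP: "z \<in> P" using z pthf(5)[OF assms(1,2)] by auto
    obtain p1 q1 where 1: "pth u x = p1 @ z # q1" "pth u z = p1 @ [z]" using pth_split[OF assms(1,2) z(1)] by blast
    obtain p2 q2 where 2: "pth u v = p2 @ z # q2" "pth u z = p2 @ [z]" using pth_split[OF assms(1,3) z(2)] by blast
    have Z: "pth u z = u # pth (nx u z) z" using pth_step[OF assms(1) zP] zu by metis
    obtain t where t: "pth (nx u z) z = nx u z # t"
      using pthf(1,2)[OF pth_step(3)[OF assms(1) zP] zP] zu by (cases "pth (nx u z) z") auto
    have "pth u x = pth u z @ q1" "pth u v = pth u z @ q2" using 1 2 by simp_all
    hence "nx u x = nx u z" "nx u v = nx u z" unfolding nx_def using Z t by simp_all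
    thus False using assms(6) by simp
  qed
  define a where "a = pth (nx u x) x"
  define b where "b = pth (nx u v) v"
  have fa: "a \<noteq> []" "last a = x" "distinct a" "set a \<subseteq> P" using pthf[OF nxP(1) assms(2)] a_def by auto
  have fb: "b \<noteq> []" "last b = v" "distinct b" "set b \<subseteq> P" using pthf[OF nxP(2) assms(3)] b_def by auto
  have ua: "u \<notin> set a" using pthf(4)[OF assms(1,2)] A a_def by simp
  have ub: "u \<notin> set b" using pthf(4)[OF assms(1,3)] B b_def by simp
  have ab: "set a \<inter> set b = {}" using disj A B a_def b_def ua by auto
  define C where "C = rev a @ u # b"
  have rA: "rev a @ [u] = rev (pth u x)" using A a_def by simp
  have "wall (\<lambda>a b. {b,a}\<in>E) (pth u x)" using pthf(6)[OF assms(1,2)] by (simp add: insert_commute)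
  hence "W (rev (pth u x))" by (simp only: wall_rev)
  hence w1: "W (rev a @ [u])" using rA by simp
  have w2: "W (u # b)" using pthf(6)[OF assms(1,3)] B b_def by simp
  have "W C" unfolding C_def using w1 w2 wall_append by metis
  moreover have "hd C = x" unfolding C_def using fa by (simp add: hd_rev)
  moreover have "last C = v" unfolding C_def using fb by simp
  moreover have "distinct C" unfolding C_def using fa fb ua ub ab by auto
  moreover have "set C \<subseteq> P" unfolding C_def using fa fb assms(1) by auto
  ultimately have "tpath P E x v C" unfolding C_def by (simp add: tpath_iff)
  hence "pth x v = C" by (rule pth_eq)
  hence "d x v = pw (rev a @ [u]) + pw (u # b)" using d_eq[OF assms(2,3)] wsum_append C_def by metis
  also have "pw (rev a @ [u]) = d x u" using rA pth_rev[OF assms(1,2)] d_eq[OF assms(2,1)] by simp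
  also have "pw (u # b) = d u v" using B b_def d_eq[OF assms(1,3)] by simp
  finally show ?thesis .
qed

lemma L5: assumes "x \<in> P" "v \<in> P" "y \<in> set (pth x v)" "y \<noteq> x" "y \<noteq> v"
  shows "nx y x \<noteq> nx y v"
proof -
  have yP: "y \<in> P" using pthf(5)[OF assms(1,2)] assms(3) by auto
  obtain p q where pq: "pth x v = p @ y # q" "pth x y = p @ [y]" "pth y v = y # q"
    using pth_split[OF assms(1-3)] by blast
  have "q \<noteq> []" using pthf(3)[OF assms(1,2)] pq(1) assms(5) by auto
  moreover have "p \<noteq> []" using pthf(2)[OF assms(1,2)] pq(1) assms(4) by auto
  moreover have "nx y v = hd q" unfolding nx_def using pq(3) by simp
  moreover have "nx y x = last p" unfolding nx_def using pth_rev[OF assms(1) yP] pq(2) \<open>p \<noteq> []\<close>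
    by (simp add: hd_rev)
  moreover have "distinct (p @ y # q)" using pthf(4)[OF assms(1,2)] pq(1) by simp
  ultimately show ?thesis by (metis disjoint_iff distinct_append hd_in_set last_in_set list.set_intros(2))
qed


lemma gp_facts: "greedy_path d s x v xs \<Longrightarrow> valid_profile P s \<Longrightarrow> x \<in> P \<Longrightarrow>
   set xs \<subseteq> P \<and> distinct xs \<and> (\<forall>y\<in>set xs. d y v \<le> d x v) \<and> (\<forall>y\<in>set (tl xs). d y v < d x v)"
proof (induction xs arbitrary: x)
  case Nil thus ?case by (simp add: greedy_path_iff)
next
  case (Cons x' xs')
  have x': "x' = x" using Cons.prems by (simp add: greedy_path_iff)
  show ?case
  proof (cases xs')
    case Nil thus ?thesis using x' Cons.prems by simp
  next
    case (Cons y ys)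
    have g: "y \<in> s x" "d y v < d x v" "greedy_path d s y v (y # ys)"
      using Cons.prems(1) x' Cons gp_Cons by metis+
    have yP: "y \<in> P" using g(1) Cons.prems(2,3) unfolding valid_profile_def by blast
    have ih: "set (y#ys) \<subseteq> P \<and> distinct (y#ys) \<and> (\<forall>z\<in>set (y#ys). d z v \<le> d y v)"
      using Cons.IH[of y] g(3) Cons.prems(2) yP Cons by blast
    hence "x \<notin> set (y#ys)" using g(2) by force
    thus ?thesis using ih g(2) x' Cons Cons.prems(3) by force
  qed
qed

lemma gp_len: "greedy_path d s x v xs \<Longrightarrow> valid_profile P s \<Longrightarrow> x \<in> P \<Longrightarrow> v \<in> P \<Longrightarrow>
   greedy_len d xs \<ge> d x v"
proof (induction xs arbitrary: x)
  case Nil thus ?case by (simp add: greedy_path_iff)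
next
  case (Cons x' xs')
  have x': "x' = x" using Cons.prems by (simp add: greedy_path_iff)
  show ?case
  proof (cases xs')
    case Nil
    have "x = v" using Cons.prems(1) x' Nil gp_single by metis
    thus ?thesis using x' Nil d_refl Cons.prems(4) by (simp add: gl_single)
  next
    case (Cons y ys)
    have g: "y \<in> s x" "d y v < d x v" "greedy_path d s y v (y # ys)"
      using Cons.prems(1) x' Cons gp_Cons by metis+
    have yP: "y \<in> P" using g(1) Cons.prems(2,3) unfolding valid_profile_def by blast
    have "greedy_len d (y#ys) \<ge> d y v" using Cons.IH[of y] g(3) Cons.prems(2,4) yP Cons by blast
    moreover have "d x v \<le> d x y + d y v" using tri Cons.prems(3,4) yP by blast
    ultimately show ?thesis using x' Cons gl_Cons by (metis add_le_cancel_left order.trans)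
  qed
qed

lemma gp_finite: assumes "valid_profile P s" "u \<in> P"
  shows "finite {xs. greedy_path d s u v xs}"
proof (rule finite_subset)
  show "{xs. greedy_path d s u v xs} \<subseteq> {xs. set xs \<subseteq> P \<and> length xs \<le> card P}"
  proof (rule subsetI)
    fix xs assume "xs \<in> {xs. greedy_path d s u v xs}"
    hence f: "set xs \<subseteq> P" "distinct xs" using gp_facts assms by blast+
    moreover have "length xs \<le> card P" using f distinct_card card_mono finP by metis
    ultimately show "xs \<in> {xs. set xs \<subseteq> P \<and> length xs \<le> card P}" by simp
  qed
  show "finite {xs. set xs \<subseteq> P \<and> length xs \<le> card P}" using finite_lists_length_le finP by blast
qed

lemma st_none: "\<not> (\<exists>xs. greedy_path d s u v xs) \<Longrightarrow> stretch d Z s u v = Z"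
  unfolding stretch_def by (rule if_not_P)

lemma st_lower: assumes "valid_profile P s" "u \<in> P" "v \<in> P" "u \<noteq> v" "1 \<le> Z"
  shows "1 \<le> stretch d Z s u v"
proof (cases "\<exists>xs. greedy_path d s u v xs")
  case True
  let ?L = "{greedy_len d xs |xs. greedy_path d s u v xs}"
  have fin: "finite ?L" using gp_finite[OF assms(1,2)] by simp
  have ne: "?L \<noteq> {}" using True by blast
  obtain xs where "greedy_path d s u v xs" "Min ?L = greedy_len d xs" using Min_in[OF fin ne] by blast
  hence "Min ?L \<ge> d u v" using gp_len assms by metis
  moreover have "d u v > 0" using d_pos assms by blast
  ultimately have "1 \<le> Min ?L / d u v" by simp
  thus ?thesis unfolding stretch_def using True by simp
next
  case False thus ?thesis using st_none assms by simp
qed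

lemma st_gt: assumes "valid_profile P s" "u \<in> P" "v \<in> P" "u \<noteq> v" "1 < Z"
  "\<And>xs. greedy_path d s u v xs \<Longrightarrow> greedy_len d xs > d u v"
  shows "1 < stretch d Z s u v"
proof (cases "\<exists>xs. greedy_path d s u v xs")
  case True
  let ?L = "{greedy_len d xs |xs. greedy_path d s u v xs}"
  have fin: "finite ?L" using gp_finite[OF assms(1,2)] by simp
  have ne: "?L \<noteq> {}" using True by blast
  obtain xs where "greedy_path d s u v xs" "Min ?L = greedy_len d xs" using Min_in[OF fin ne] by blast
  hence "Min ?L > d u v" using assms(6) by metis
  moreover have "d u v > 0" using d_pos assms by blast
  ultimately have "1 < Min ?L / d u v" by simp
  thus ?thesis unfolding stretch_def using True by simp
next
  case False thus ?thesis using st_none assms by simp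
qed

lemma st_one: assumes "valid_profile P s" "u \<in> P" "v \<in> P" "u \<noteq> v"
  "greedy_path d s u v xs" "greedy_len d xs = d u v"
  shows "stretch d Z s u v = 1"
proof -
  let ?L = "{greedy_len d xs |xs. greedy_path d s u v xs}"
  have fin: "finite ?L" using gp_finite[OF assms(1,2)] by simp
  have ne: "?L \<noteq> {}" using assms(5) by blast
  obtain ys where "greedy_path d s u v ys" "Min ?L = greedy_len d ys" using Min_in[OF fin ne] by blast
  hence "Min ?L \<ge> d u v" using gp_len assms by metis
  moreover have "Min ?L \<le> d u v" using Min_le[OF fin] assms(5,6) by (metis (mono_tags, lifting) mem_Collect_eq)
  moreover have "d u v > 0" using d_pos assms by blast
  ultimately show ?thesis unfolding stretch_def using assms(5) by auto
qed



definition C where "C u n = {v \<in> P. v \<noteq> u \<and> nx u v = n}"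
definition GG where "GG s x v = (\<exists>xs. greedy_path d s x v xs \<and> greedy_len d xs = d x v)"
definition N where "N u = {n. {u,n} \<in> E}"

lemma GGc: "x \<in> P \<Longrightarrow> v \<in> P \<Longrightarrow> (\<forall>y\<in>set (pth x v). y \<noteq> v \<longrightarrow> nx y v \<in> s y) \<Longrightarrow> GG s x v"
proof (induction "length (pth x v)" arbitrary: x rule: less_induct)
  case less
  show ?case
  proof (cases "x = v")
    case True
    have "greedy_path d s x v [x]" "greedy_len d [x] = d x v"
    proof -
      have "d v v = 0" using d_refl less.prems(2) by blast
      thus "greedy_path d s x v [x]" "greedy_len d [x] = d x v" using True by (simp_all only: gp_single gl_single)
    qed
    thus ?thesis unfolding GG_def by blast
  next
    case False
    note st = pth_step[OF less.prems(1,2) False]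
    let ?n = "nx x v"
    have "GG s ?n v"
    proof (rule less.hyps)
      show "length (pth ?n v) < length (pth x v)" using st(1) by simp
      show "\<forall>y\<in>set (pth ?n v). y \<noteq> v \<longrightarrow> nx y v \<in> s y" using less.prems(3) st(1) by simp
      show "?n \<in> P" by (rule st(3))
      show "v \<in> P" by (rule less.prems(2))
    qed
    then obtain xs where xs: "greedy_path d s ?n v xs" "greedy_len d xs = d ?n v" unfolding GG_def by blast
    obtain ys where ys: "xs = ?n # ys" using gp_hd[OF xs(1)] by blast
    have ns: "?n \<in> s x" using less.prems(3) st(1) False by simp
    have dxn: "d x ?n > 0" using d_edge[OF st(2)] wpos st(2) by auto
    have ds: "d x v = d x ?n + d ?n v" using d_step[OF less.prems(1,2) False] .
    have "d ?n v < d x v" using dxn ds by simp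
    hence "greedy_path d s x v (x # xs)" unfolding ys gp_Cons using xs(1) ys ns by simp
    moreover have "greedy_len d (x # xs) = d x v" using ys xs(2) ds gl_Cons by metis
    ultimately show ?thesis unfolding GG_def by blast
  qed
qed

lemma FH: assumes vs: "valid_profile P s" and uP: "u \<in> P" and A: "A \<subseteq> P - {u}" and vP: "v \<in> P" "v \<noteq> u"
  and g: "greedy_path d (s(u:=A)) u v xs"
  shows "\<exists>y ys. xs = u # y # ys \<and> y \<in> A \<and> y \<in> C u (nx u v) \<and> greedy_path d s y v (y # ys)
     \<and> greedy_len d xs = d u y + greedy_len d (y # ys)"
proof -
  obtain t where t: "xs = u # t" using gp_hd[OF g] by blast
  have "t \<noteq> []" using t g vP(2) gp_single by metis
  then obtain y ys where yys: "t = y # ys" by (cases t) auto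
  have g2: "y \<in> A" "d y v < d u v" "greedy_path d (s(u:=A)) y v (y # ys)"
    using g t yys gp_Cons[of d "s(u:=A)" u v y ys] by auto
  have yP: "y \<in> P" "y \<noteq> u" using g2(1) A by auto
  have vs1: "valid_profile P (s(u:=A))" using valid_upd[OF vs uP A] .
  have "\<forall>z\<in>set (y#ys). d z v \<le> d y v" using gp_facts[OF g2(3) vs1 yP(1)] by blast
  hence un: "u \<notin> set (y#ys)" using g2(2) by force
  have g3: "greedy_path d s y v (y # ys)" using g2(3) gp_upd[OF un] by blast
  have "nx u y = nx u v"
  proof (rule ccontr)
    assume "nx u y \<noteq> nx u v"
    hence "d y v = d y u + d u v" using F1 uP yP vP by blast
    moreover have "d y u \<ge> 0" using d_nonneg yP uP by blast
    ultimately show False using g2(2) by simp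
  qed
  hence "y \<in> C u (nx u v)" unfolding C_def using yP by simp
  thus ?thesis using t yys g2(1) g3 by (intro exI[of _ y] exI[of _ ys]) (simp add: gl_Cons)
qed

lemma FH': assumes vs: "valid_profile P s" and uP: "u \<in> P" and "y \<in> A" "y \<in> P" "d y v < d u v"
  and g: "greedy_path d s y v (y # ys)"
  shows "greedy_path d (s(u:=A)) u v (u # y # ys)"
proof -
  have "\<forall>z\<in>set (y#ys). d z v \<le> d y v" using gp_facts[OF g vs assms(4)] by blast
  hence un: "u \<notin> set (y#ys)" using assms(5) by force
  have "greedy_path d (s(u:=A)) y v (y # ys)" using g gp_upd[OF un] by blast
  thus ?thesis unfolding gp_Cons using assms(3,5) by simp
qed

lemma SD: assumes vs: "valid_profile P s" and uP: "u \<in> P" and A: "A \<subseteq> P - {u}" and B: "B \<subseteq> P - {u}"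
  and vP: "v \<in> P" "v \<noteq> u" and AB: "A \<inter> C u (nx u v) = B \<inter> C u (nx u v)"
  shows "stretch d Z (s(u:=A)) u v = stretch d Z (s(u:=B)) u v"
proof -
  have imp: "greedy_path d (s(u:=B')) u v xs"
    if A': "A' \<subseteq> P - {u}" "A' \<inter> C u (nx u v) = B' \<inter> C u (nx u v)" and g: "greedy_path d (s(u:=A')) u v xs"
    for A' B' xs
  proof -
    obtain y ys where y: "xs = u # y # ys" "y \<in> A'" "y \<in> C u (nx u v)" "greedy_path d s y v (y # ys)"
      using FH[OF vs uP A'(1) vP g] by blast
    have yB: "y \<in> B'" using y(2,3) A'(2) by blast
    have yP: "y \<in> P" using y(3) unfolding C_def by simp
    have yd: "d y v < d u v"
      using g y(1) gp_Cons[of d "s(u:=A')" u v y ys] by simp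
    show ?thesis using FH'[OF vs uP yB yP yd y(4)] y(1) by simp
  qed
  have eqf: "greedy_path d (s(u:=A)) u v = greedy_path d (s(u:=B)) u v"
  proof (intro ext iffI)
    fix xs assume "greedy_path d (s(u:=A)) u v xs" thus "greedy_path d (s(u:=B)) u v xs" by (rule imp[OF A AB])
  next
    fix xs assume "greedy_path d (s(u:=B)) u v xs" thus "greedy_path d (s(u:=A)) u v xs" by (rule imp[OF B AB[symmetric]])
  qed
  show ?thesis unfolding stretch_def eqf by (rule refl)
qed

lemma sum_ge_pick: fixes g :: "'b \<Rightarrow> real"
  assumes "finite K" "n \<in> K" "\<forall>v\<in>K. 1 \<le> g v"
  shows "g n + (real (card K) - 1) \<le> sum g K"
proof -
  have "sum g K = g n + sum g (K - {n})" using sum.remove assms by metis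
  moreover have "sum (\<lambda>_. 1) (K - {n}) \<le> sum g (K - {n})" using assms(3) by (intro sum_mono) auto
  moreover have "card (K - {n}) = card K - 1" using assms by simp
  moreover have "card K \<ge> 1" using assms card_0_eq by fastforce
  ultimately show ?thesis by (simp add: of_nat_diff)
qed

lemma sum_ge_card: fixes g :: "'b \<Rightarrow> real"
  assumes "\<forall>v\<in>K. 1 \<le> g v" shows "real (card K) \<le> sum g K"
  using sum_mono[of K "\<lambda>_. 1" g] assms by simp

definition ch where "ch r y = {m. {y,m} \<in> E \<and> (y = r \<or> m \<noteq> nx y r)}"

lemma Cfacts: assumes "u \<in> P" "{u,n} \<in> E" "v \<in> C u n" "y \<in> set (pth n v)"
  shows "v \<in> P" "v \<noteq> u" "n \<in> P" "y \<in> P" "y \<in> set (pth u v)" "y \<noteq> u" "pth u v = u # pth n v"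
proof -
  show v: "v \<in> P" "v \<noteq> u" using assms(3) unfolding C_def by auto
  have nx: "nx u v = n" using assms(3) unfolding C_def by auto
  show nP: "n \<in> P" using edge_in assms(2) by auto
  show pe: "pth u v = u # pth n v" using pth_step(1)[OF assms(1) v(1) v(2)[symmetric]] nx by simp
  show "y \<in> P" using pthf(5)[OF nP v(1)] assms(4) by auto
  show "y \<in> set (pth u v)" using pe assms(4) by simp
  show "y \<noteq> u" using pthf(4)[OF assms(1) v(1)] pe assms(4) by auto
qed

lemma P1: assumes rP: "r \<in> P" and uP: "u \<in> P" and un: "{u,n} \<in> E" and ch: "u = r \<or> n \<noteq> nx u r"
  and vC: "v \<in> C u n" and y: "y \<in> set (pth n v)" "y \<noteq> v"
  shows "d r y > d r u \<and> nx y v \<in> ch r y"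
proof -
  note cf = Cfacts[OF uP un vC y(1)]
  have nxv: "nx u v = n" using vC unfolding C_def by auto
  have h1: "d r v = d r u + d u v"
  proof (cases "u = r")
    case True thus ?thesis using d_refl rP by simp
  next
    case False
    hence "nx u r \<noteq> nx u v" using ch nxv by simp
    thus ?thesis using F1[OF uP rP cf(1) _ cf(2)] False by metis
  qed
  have h2: "d u v = d u y + d y v" using d_split[OF uP cf(1) cf(5)] .
  have t1: "d r v \<le> d r y + d y v" using tri[OF rP cf(4) cf(1)] .
  have t2: "d r y \<le> d r u + d u y" using tri[OF rP uP cf(4)] .
  have dp: "d u y > 0" using d_pos[OF uP cf(4)] cf(6) by auto
  have e1: "d r y = d r u + d u y" using h1 h2 t1 t2 by linarith
  have e2: "d r v = d r y + d y v" using h1 h2 e1 by linarith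
  have gt: "d r y > d r u" using e1 dp by simp
  have yr: "y \<noteq> r" using gt d_refl[OF rP] d_nonneg[OF rP uP] by auto
  let ?m = "nx y v"
  have ym: "{y, ?m} \<in> E" using pth_step(2)[OF cf(4) cf(1) y(2)] .
  have "?m \<noteq> nx y r"
  proof
    assume eq: "?m = nx y r"
    have mP: "?m \<in> P" using pth_step(3)[OF cf(4) cf(1) y(2)] .
    have a1: "d y v = d y ?m + d ?m v" using d_step[OF cf(4) cf(1) y(2)] .
    have a2: "d y r = d y ?m + d ?m r" using d_step[OF cf(4) rP yr] eq by simp
    have a3: "d y ?m > 0" using d_edge[OF ym] wpos ym by auto
    have a4: "d r v \<le> d r ?m + d ?m v" using tri[OF rP mP cf(1)] .
    have a5: "d r ?m = d ?m r" using d_sym[OF rP mP] .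
    have a6: "d r y = d y r" using d_sym[OF rP cf(4)] .
    show False using a1 a2 a3 a4 a5 a6 e2 by linarith
  qed
  hence "?m \<in> ch r y" using ym unfolding ch_def by simp
  thus ?thesis using gt by simp
qed

lemma P2: assumes rP: "r \<in> P" and uP: "u \<in> P" and un: "{u,n} \<in> E"
  and vC: "v \<in> C u n" and y: "y \<in> set (pth n v)" "y \<noteq> v" "y \<noteq> r" "nx y v = nx y r"
  shows "d r y < d r u"
proof -
  note cf = Cfacts[OF uP un vC y(1)]
  have "nx y u \<noteq> nx y v" using L5[OF uP cf(1) cf(5) cf(6) y(2)] .
  hence "nx y u \<noteq> nx y r" using y(4) by simp
  hence "d u r = d u y + d y r" using F1[OF cf(4) uP rP cf(6)[symmetric] y(3)[symmetric]] by simp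
  moreover have "d u y > 0" using d_pos[OF uP cf(4)] cf(6) by auto
  ultimately have "d y r < d u r" by simp
  thus ?thesis using d_sym[OF rP cf(4)] d_sym[OF rP uP] by simp
qed

end

locale game_loc = tree_loc +
  fixes \<alpha> Z :: real
  assumes apos: "\<alpha> > 0" and Zbig: "Z > 1 + \<alpha>"
begin

lemma KEY: assumes vs: "valid_profile P s" and uP: "u \<in> P" and un: "{u,n} \<in> E"
  and H: "\<forall>v\<in>C u n. GG s n v" and br: "best_response P d \<alpha> Z s u S"
  shows "S \<inter> C u n = {n}"
proof (rule ccontr)
  assume ne: "S \<inter> C u n \<noteq> {n}"
  define K where "K = C u n"
  have SP: "S \<subseteq> P - {u}" using br unfolding best_response_def by blast
  have nP: "n \<in> P" "n \<noteq> u" using edge_in un by auto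
  have nK: "n \<in> K" unfolding K_def C_def using nP nx_edge[OF un] by simp
  have KP: "K \<subseteq> P - {u}" unfolding K_def C_def by auto
  have finK: "finite K" using KP finP finite_subset by blast
  define S' where "S' = (S - K) \<union> {n}"
  have S'P: "S' \<subseteq> P - {u}" unfolding S'_def using SP nP by auto
  have vs1: "valid_profile P (s(u:=S))" using valid_upd[OF vs uP SP] .
  have vs2: "valid_profile P (s(u:=S'))" using valid_upd[OF vs uP S'P] .
  define f where "f A v = stretch d Z (s(u:=A)) u v" for A v
  have cost_eq: "cost P d \<alpha> Z (s(u:=A)) u = (\<Sum>v\<in>K. f A v) + (\<Sum>v\<in>(P - {u}) - K. f A v) + \<alpha> * real (card A)" for A
  proof -
    have "(\<Sum>v\<in>P - {u}. f A v) = (\<Sum>v\<in>(P - {u}) - K. f A v) + (\<Sum>v\<in>K. f A v)"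
      using sum.subset_diff[OF KP] finP by blast
    thus ?thesis unfolding cost_def f_def by simp
  qed
  have le: "cost P d \<alpha> Z (s(u:=S)) u \<le> cost P d \<alpha> Z (s(u:=S')) u"
    using br S'P unfolding best_response_def by blast
  have R: "(\<Sum>v\<in>(P - {u}) - K. f S v) = (\<Sum>v\<in>(P - {u}) - K. f S' v)"
  proof (rule sum.cong)
    fix v assume v: "v \<in> (P - {u}) - K"
    let ?m = "nx u v"
    have mn: "?m \<noteq> n" using v unfolding K_def C_def by auto
    have "S \<inter> C u ?m = S' \<inter> C u ?m" unfolding S'_def K_def C_def using mn nx_edge[OF un] by auto
    thus "f S v = f S' v" unfolding f_def using SD[OF vs uP SP S'P] v by blast
  qed simp
  have K1: "f S' v = 1" if vK: "v \<in> K" for v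
  proof -
    have v: "v \<in> P" "v \<noteq> u" "nx u v = n" using vK unfolding K_def C_def by auto
    obtain xs where xs: "greedy_path d s n v xs" "greedy_len d xs = d n v" using H vK unfolding K_def GG_def by blast
    obtain ys where ys: "xs = n # ys" using gp_hd[OF xs(1)] by blast
    have dun: "d u n > 0" using d_pos[OF uP nP(1) nP(2)[symmetric]] .
    have duv: "d u v = d u n + d n v" using d_step[OF uP v(1) v(2)[symmetric]] v(3) by simp
    have nS': "n \<in> S'" unfolding S'_def by simp
    have dnv: "d n v < d u v" using dun duv by simp
    have g1: "greedy_path d (s(u:=S')) u v (u # n # ys)"
      using FH'[OF vs uP nS' nP(1) dnv xs(1)[unfolded ys]] .
    have g2: "greedy_len d (u # n # ys) = d u v" using xs(2) ys duv by (simp add: gl_Cons)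
    show ?thesis unfolding f_def by (rule st_one[OF vs2 uP v(1) v(2)[symmetric] g1 g2])
  qed
  have K1s: "(\<Sum>v\<in>K. f S' v) = real (card K)" using K1 by simp
  have Kge: "\<forall>v\<in>K. 1 \<le> f S v"
  proof
    fix v assume "v \<in> K"
    hence v: "v \<in> P" "u \<noteq> v" using KP by auto
    have "1 \<le> Z" using Zbig apos by simp
    thus "1 \<le> f S v" unfolding f_def by (rule st_lower[OF vs1 uP v])
  qed
  have cS: "card S = card (S - K) + card (S \<inter> K)"
  proof -
    have "finite S" using SP finP finite_subset by blast
    thus ?thesis using card_Int_Diff[of S K] by simp
  qed
  have cS': "card S' = card (S - K) + 1"
  proof -
    have "finite (S - K)" using SP finP finite_subset by blast
    moreover have "n \<notin> S - K" using nK by simp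
    ultimately show ?thesis unfolding S'_def by simp
  qed
  have main: "(\<Sum>v\<in>K. f S v) + \<alpha> * real (card (S \<inter> K)) \<le> real (card K) + \<alpha>"
    using le cost_eq[of S] cost_eq[of S'] R K1s cS cS' by (simp add: algebra_simps)
  have finSK: "finite (S \<inter> K)" using finK by simp
  consider "S \<inter> K = {}" | x where "S \<inter> K = {x}" | "card (S \<inter> K) \<ge> 2"
  proof -
    consider "card (S \<inter> K) = 0" | "card (S \<inter> K) = 1" | "card (S \<inter> K) \<ge> 2" by linarith
    thus thesis
    proof cases
      case 1 thus thesis using finSK that(1) by simp
    next
      case 2 thus thesis using that(2) card_1_singletonE by blast
    next
      case 3 thus thesis using that(3) by blast
    qed
  qed
  thus False
  proof cases
    case 1
    have "\<not> (\<exists>xs. greedy_path d (s(u:=S)) u n xs)"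
    proof
      assume "\<exists>xs. greedy_path d (s(u:=S)) u n xs"
      then obtain xs where gx: "greedy_path d (s(u:=S)) u n xs" by blast
      obtain y ys where y: "xs = u # y # ys" "y \<in> S" "y \<in> C u (nx u n)" "greedy_path d s y n (y # ys)"
        "greedy_len d xs = d u y + greedy_len d (y # ys)" using FH[OF vs uP SP nP(1) nP(2) gx] by blast
      have "y \<in> S \<inter> K" using y(2,3) nx_edge[OF un] by (simp add: K_def)
      thus False using 1 by simp
    qed
    hence "f S n = Z" unfolding f_def by (rule st_none)
    hence "Z + (real (card K) - 1) \<le> (\<Sum>v\<in>K. f S v)" using sum_ge_pick[OF finK nK Kge] by simp
    thus False using main 1 Zbig by simp
  next
    case (2 x)
    have xn: "x \<noteq> n" using 2 ne unfolding K_def by blast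
    have xK: "x \<in> K" "x \<in> S" using 2 by auto
    have x: "x \<in> P" "x \<noteq> u" "nx u x = n" using xK unfolding K_def C_def by auto
    have "1 < f S n" unfolding f_def
    proof (rule st_gt[OF vs1 uP nP(1) nP(2)[symmetric]])
      show "1 < Z" using Zbig apos by simp
      fix xs assume g: "greedy_path d (s(u:=S)) u n xs"
      obtain y ys where y: "xs = u # y # ys" "y \<in> S" "y \<in> C u (nx u n)" "greedy_path d s y n (y # ys)"
        "greedy_len d xs = d u y + greedy_len d (y # ys)" using FH[OF vs uP SP nP(1) nP(2) g] by blast
      have "y \<in> S \<inter> K" using y(2,3) nx_edge[OF un] by (simp add: K_def)
      hence "y = x" using 2 by simp
      hence "y \<in> P" using x(1) by simp
      have "greedy_len d (y # ys) \<ge> d y n" by (rule gp_len[OF y(4) vs \<open>y \<in> P\<close> nP(1)])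
      moreover have "d u x = d u n + d n x" using d_step[OF uP x(1) x(2)[symmetric]] x(3) by simp
      moreover have "d n x > 0" using d_pos[OF nP(1) x(1)] xn by auto
      moreover have "d x n = d n x" using d_sym[OF x(1) nP(1)] .
      ultimately show "d u n < greedy_len d xs" using y(5) \<open>y = x\<close> by simp
    qed
    hence "1 + (real (card K) - 1) < (\<Sum>v\<in>K. f S v)" using sum_ge_pick[OF finK nK Kge] by simp
    thus False using main 2 by simp
  next
    case 3
    have "real (card K) \<le> (\<Sum>v\<in>K. f S v)" using sum_ge_card[OF Kge] .
    moreover have "\<alpha> * real (card (S \<inter> K)) \<ge> \<alpha> * 2" using 3 apos by simp
    ultimately show False using main apos by simp
  qed
qed


lemma BR_ex: assumes "u \<in> P" shows "\<exists>S. best_response P d \<alpha> Z s u S"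
proof -
  define F where "F = Pow (P - {u})"
  define g where "g S = cost P d \<alpha> Z (s(u:=S)) u" for S
  have fin: "finite (g ` F)" unfolding F_def using finP by simp
  have ne: "g ` F \<noteq> {}" unfolding F_def by blast
  obtain S where S: "S \<in> F" "g S = Min (g ` F)" using Min_in[OF fin ne] by auto
  have "\<forall>S'. S' \<subseteq> P - {u} \<longrightarrow> g S \<le> g S'" using S Min_le[OF fin] unfolding F_def by simp
  thus ?thesis using S(1) unfolding best_response_def F_def g_def by blast
qed

lemma KEY_all: assumes vs: "valid_profile P s" and uP: "u \<in> P"
  and H: "\<forall>n. {u,n} \<in> E \<longrightarrow> (\<forall>v\<in>C u n. GG s n v)" and br: "best_response P d \<alpha> Z s u S"
  shows "S = N u"
proof
  have SP: "S \<subseteq> P - {u}" using br unfolding best_response_def by blast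
  show "S \<subseteq> N u"
  proof
    fix x assume xS: "x \<in> S"
    hence x: "x \<in> P" "x \<noteq> u" using SP by auto
    let ?n = "nx u x"
    have un: "{u, ?n} \<in> E" using pth_step(2)[OF uP x(1) x(2)[symmetric]] .
    have "x \<in> C u ?n" unfolding C_def using x by simp
    moreover have "S \<inter> C u ?n = {?n}" using KEY[OF vs uP un _ br] H un by blast
    ultimately have "x = ?n" using xS by blast
    thus "x \<in> N u" using un unfolding N_def by simp
  qed
  show "N u \<subseteq> S"
  proof
    fix n assume "n \<in> N u"
    hence un: "{u,n} \<in> E" unfolding N_def by simp
    have "S \<inter> C u n = {n}" using KEY[OF vs uP un _ br] H un by blast
    thus "n \<in> S" by blast
  qed
qed

abbreviation "brs \<equiv> br_step P d \<alpha> Z"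

lemma step_ok: assumes "valid_profile P s" "u \<in> P" "best_response P d \<alpha> Z s u S"
  shows "brs s (s(u:=S))" "valid_profile P (s(u:=S))"
proof -
  show "brs s (s(u:=S))" unfolding br_step_def using assms(2,3) by blast
  have "S \<subseteq> P - {u}" using assms(3) unfolding best_response_def by blast
  thus "valid_profile P (s(u:=S))" using valid_upd[OF assms(1,2)] by blast
qed

lemma phase1: assumes rP: "r \<in> P" and L: "set L = P" "sorted (map (\<lambda>x. - d r x) L)" and vs: "valid_profile P s"
  shows "k \<le> length L \<Longrightarrow> \<exists>s'. brs\<^sup>*\<^sup>* s s' \<and> valid_profile P s' \<and> (\<forall>y\<in>set (take k L). ch r y \<subseteq> s' y)"
proof (induction k)
  case 0 thus ?case using vs by (intro exI[of _ s]) simp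
next
  case (Suc k)
  then obtain s' where s': "brs\<^sup>*\<^sup>* s s'" "valid_profile P s'" "\<forall>y\<in>set (take k L). ch r y \<subseteq> s' y" by auto
  have kL: "k < length L" using Suc.prems by simp
  define u where "u = L ! k"
  have uP: "u \<in> P" using kL L(1) u_def by auto
  obtain S where br: "best_response P d \<alpha> Z s' u S" using BR_ex[OF uP] by blast
  have chS: "ch r u \<subseteq> S"
  proof
    fix n assume nch: "n \<in> ch r u"
    hence un: "{u,n} \<in> E" and cc: "u = r \<or> n \<noteq> nx u r" unfolding ch_def by auto
    have "\<forall>v\<in>C u n. GG s' n v"
    proof
      fix v assume vC: "v \<in> C u n"
      show "GG s' n v"
      proof (rule GGc)
        show "n \<in> P" "v \<in> P" using edge_in[OF un] vC unfolding C_def by auto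
        show "\<forall>y\<in>set (pth n v). y \<noteq> v \<longrightarrow> nx y v \<in> s' y"
        proof (intro ballI impI)
          fix y assume y: "y \<in> set (pth n v)" "y \<noteq> v"
          have p: "d r y > d r u" "nx y v \<in> ch r y" using P1[OF rP uP un cc vC y] by auto
          have "y \<in> P" using Cfacts(4)[OF uP un vC y(1)] .
          hence "y \<in> set (take k L)" using sorted_take[OF L(2), of y k] L(1) kL p(1) u_def by simp
          thus "nx y v \<in> s' y" using s'(3) p(2) by blast
        qed
      qed
    qed
    hence "S \<inter> C u n = {n}" using KEY[OF s'(2) uP un _ br] by blast
    thus "n \<in> S" by blast
  qed
  note so = step_ok[OF s'(2) uP br]
  have "brs\<^sup>*\<^sup>* s (s'(u:=S))" using s'(1) so(1) by simp
  moreover have "\<forall>y\<in>set (take (Suc k) L). ch r y \<subseteq> (s'(u:=S)) y"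
    using s'(3) chS kL u_def by (auto simp: take_Suc_conv_app_nth)
  ultimately show ?case using so(2) by blast
qed

lemma phase2: assumes rP: "r \<in> P" and L: "set L = P" "sorted (map (\<lambda>x. d r x) L)" and vs: "valid_profile P s"
  and chs: "\<forall>y\<in>P. ch r y \<subseteq> s y"
  shows "k \<le> length L \<Longrightarrow> \<exists>s'. brs\<^sup>*\<^sup>* s s' \<and> valid_profile P s' \<and> (\<forall>y\<in>P. ch r y \<subseteq> s' y)
     \<and> (\<forall>y\<in>set (take k L). s' y = N y)"
proof (induction k)
  case 0 thus ?case using vs chs by (intro exI[of _ s]) simp
next
  case (Suc k)
  then obtain s' where s': "brs\<^sup>*\<^sup>* s s'" "valid_profile P s'" "\<forall>y\<in>P. ch r y \<subseteq> s' y"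
    "\<forall>y\<in>set (take k L). s' y = N y" by auto
  have kL: "k < length L" using Suc.prems by simp
  define u where "u = L ! k"
  have uP: "u \<in> P" using kL L(1) u_def by auto
  obtain S where br: "best_response P d \<alpha> Z s' u S" using BR_ex[OF uP] by blast
  have H: "\<forall>n. {u,n} \<in> E \<longrightarrow> (\<forall>v\<in>C u n. GG s' n v)"
  proof (intro allI impI ballI)
    fix n v assume un: "{u,n} \<in> E" and vC: "v \<in> C u n"
    show "GG s' n v"
    proof (rule GGc)
      show "n \<in> P" "v \<in> P" using edge_in[OF un] vC unfolding C_def by auto
      show "\<forall>y\<in>set (pth n v). y \<noteq> v \<longrightarrow> nx y v \<in> s' y"
      proof (intro ballI impI)
        fix y assume y: "y \<in> set (pth n v)" "y \<noteq> v"
        have yP: "y \<in> P" using Cfacts(4)[OF uP un vC y(1)] .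
        have vP: "v \<in> P" using Cfacts(1)[OF uP un vC y(1)] .
        have ym: "{y, nx y v} \<in> E" using pth_step(2)[OF yP vP y(2)] .
        show "nx y v \<in> s' y"
        proof (cases "y = r \<or> nx y v \<noteq> nx y r")
          case True
          hence "nx y v \<in> ch r y" using ym unfolding ch_def by auto
          thus ?thesis using s'(3) yP by blast
        next
          case False
          hence "d r y < d r u" using P2[OF rP uP un vC y] by auto
          hence "y \<in> set (take k L)" using sorted_take[OF L(2), of y k] L(1) kL yP u_def by simp
          hence "s' y = N y" using s'(4) by blast
          thus ?thesis using ym unfolding N_def by simp
        qed
      qed
    qed
  qed
  have SN: "S = N u" using KEY_all[OF s'(2) uP H br] .
  note so = step_ok[OF s'(2) uP br]
  have "brs\<^sup>*\<^sup>* s (s'(u:=S))" using s'(1) so(1) by simp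
  moreover have "\<forall>y\<in>P. ch r y \<subseteq> (s'(u:=S)) y" using s'(3) SN unfolding ch_def N_def by auto
  moreover have "\<forall>y\<in>set (take (Suc k) L). (s'(u:=S)) y = N y"
    using s'(4) SN kL u_def by (auto simp: take_Suc_conv_app_nth)
  ultimately show ?case using so(2) by blast
qed

lemma final_NE: assumes vs: "valid_profile P s" and all: "\<forall>y\<in>P. s y = N y"
  shows "nash_equilibrium P d \<alpha> Z s"
  unfolding nash_equilibrium_def
proof (intro conjI ballI vs)
  fix u assume uP: "u \<in> P"
  obtain S where br: "best_response P d \<alpha> Z s u S" using BR_ex[OF uP] by blast
  have H: "\<forall>n. {u,n} \<in> E \<longrightarrow> (\<forall>v\<in>C u n. GG s n v)"
  proof (intro allI impI ballI)
    fix n v assume un: "{u,n} \<in> E" and vC: "v \<in> C u n"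
    show "GG s n v"
    proof (rule GGc)
      show "n \<in> P" "v \<in> P" using edge_in[OF un] vC unfolding C_def by auto
      show "\<forall>y\<in>set (pth n v). y \<noteq> v \<longrightarrow> nx y v \<in> s y"
      proof (intro ballI impI)
        fix y assume y: "y \<in> set (pth n v)" "y \<noteq> v"
        have yP: "y \<in> P" using Cfacts(4)[OF uP un vC y(1)] .
        have vP: "v \<in> P" using Cfacts(1)[OF uP un vC y(1)] .
        have ym: "{y, nx y v} \<in> E" using pth_step(2)[OF yP vP y(2)] .
        thus "nx y v \<in> s y" using all yP unfolding N_def by simp
      qed
    qed
  qed
  have "S = s u" using KEY_all[OF vs uP H br] all uP by simp
  thus "best_response P d \<alpha> Z s u (s u)" using br by simp
qed

lemma weakly: "weakly_acyclic_br P d \<alpha> Z"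
  unfolding weakly_acyclic_br_def
proof (intro allI impI)
  fix s assume vs: "valid_profile P s"
  show "\<exists>ss. ss \<noteq> [] \<and> hd ss = s \<and> (\<forall>i<length ss - 1. brs (ss ! i) (ss ! Suc i)) \<and> nash_equilibrium P d \<alpha> Z (last ss)"
  proof (cases "P = {}")
    case True
    have "nash_equilibrium P d \<alpha> Z s" unfolding nash_equilibrium_def using vs True by simp
    thus ?thesis by (intro exI[of _ "[s]"]) simp
  next
    case False
    then obtain r where rP: "r \<in> P" by blast
    obtain xs0 where xs0: "set xs0 = P" using finite_list[OF finP] by blast
    define L1 where "L1 = sort_key (\<lambda>x. - d r x) xs0"
    define L2 where "L2 = sort_key (\<lambda>x. d r x) xs0"
    have L1: "set L1 = P" "sorted (map (\<lambda>x. - d r x) L1)" unfolding L1_def using xs0 by simp_all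
    have L2: "set L2 = P" "sorted (map (\<lambda>x. d r x) L2)" unfolding L2_def using xs0 by simp_all
    obtain s1 where s1: "brs\<^sup>*\<^sup>* s s1" "valid_profile P s1" "\<forall>y\<in>set (take (length L1) L1). ch r y \<subseteq> s1 y"
      using phase1[OF rP L1 vs, of "length L1"] by blast
    have s1c: "\<forall>y\<in>P. ch r y \<subseteq> s1 y" using s1(3) L1(1) by simp
    obtain s2 where s2: "brs\<^sup>*\<^sup>* s1 s2" "valid_profile P s2" "\<forall>y\<in>set (take (length L2) L2). s2 y = N y"
      using phase2[OF rP L2 s1(2) s1c, of "length L2"] by blast
    have "\<forall>y\<in>P. s2 y = N y" using s2(3) L2(1) by simp
    hence ne: "nash_equilibrium P d \<alpha> Z s2" using final_NE[OF s2(2)] by blast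
    have "brs\<^sup>*\<^sup>* s s2" using s1(1) s2(1) by simp
    then obtain ss where "ss \<noteq> []" "hd ss = s" "last ss = s2" "\<forall>i < length ss - 1. brs (ss ! i) (ss ! Suc i)"
      using rt_list by metis
    thus ?thesis using ne by blast
  qed
qed

end

theorem theorem3p5:
  fixes P :: "'a set" and E :: "'a set set" and w :: "'a set \<Rightarrow> real" and \<alpha> :: real
  assumes "finite P"
    and "spanning_tree P E"
    and "\<forall>e\<in>E. w e > 0"
    and "\<alpha> > 0"
  shows "\<exists>Z0. \<forall>Z \<ge> Z0. weakly_acyclic_br P (tree_dist P E w) \<alpha> Z"
proof (intro exI[of _ "\<alpha> + 2"] allI impI)
  fix Z assume Z: "\<alpha> + 2 \<le> Z"
  interpret game_loc P E w \<alpha> Z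
    by unfold_locales (use assms Z in auto)
  show "weakly_acyclic_br P (tree_dist P E w) \<alpha> Z" by (rule weakly)
qed

end
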